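(* Let $F\in\ell^2(\mathbb Z)$ be supported in $[0,\infty)$. Define $(a_0,b_0)=(1+|F_0|^2)^{-1/2}(1,F_0)$ and, for $k>0$, $(a_k(z),b_k(z))=(a_{k-1}(z),b_{k-1}(z))\,(1+|F_k|^2)^{-1/2}(1,F_kz^k)$. Then $(a_k,b_k)$ converges in $(\mathbf L,\rho)$ to an element $(a,b)\in\overline{\mathbf H}$, and $$a(\infty)=\prod_{n\ge0}(1+|F_n|^2)^{-1/2}.$$
   Context: $\mathbb T$ is the unit circle, $\mathbb D$ the open unit disc, $\mathbb D^*=\{\overline z^{-1}:z\in\mathbb D\}$, $a^*(z)=\overline{a(\overline z^{-1})}$ (so $a^*=\overline a$ on $\mathbb T$), $\int_{\mathbb T}a=\int_0^1a(e^{2\pi i\theta})d\theta$. $H^2(\mathbb D)$ is the space of $f\in L^2(\mathbb T)$ with vanishing negative Fourier coefficients; $H^2(\mathbb D^* )$ the space of $f$ with $f^*\in H^2(\mathbb D)$; for such $f$, $f(\infty):=\overline{f^*(0)}=\int_{\mathbb T}f$. Pairs multiply as $(a,b)(c,d)=(ac-bd^*,ad+bc^* )$, where a constant $y$ satisfies $y^*=\overline y$ and $z\mapsto z^k$ satisfies $(z^k)^*=z^{-k}$. $\mathbf L$ is the set of pairs $(a,b)$ of measurable functions on $\mathbb T$ with $aa^*+bb^*=1$ a.e., $a\in H^2(\mathbb D^* )$, $a(\infty)>0$, with metric $\rho((a,b),(c,d))=\|a-c\|_{L^2(\mathbb T)}+\|b-d\|_{L^2(\mathbb T)}+|\log a(\infty)-\log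 c(\infty)|$. $\overline{\mathbf H}$ is the set of $(a,b)\in\mathbf L$ with $b\in H^2(\mathbb D)$. *)

theory Defs
  imports "HOL-Analysis.Analysis"
begin

text \<open>Functions on the unit circle T are represented through the parametrisation
  theta in [0,1] |-> exp(2 pi i theta); i.e. a function a on T is represented by
  the function (real => complex) theta |-> a(exp(2 pi i theta)).  The normalised
  measure on T becomes Lebesgue measure on [0,1].\<close>

abbreviation circ_meas :: "real measure" where
  "circ_meas \<equiv> lebesgue_on {0..1}"

definition circ_int :: "(real \<Rightarrow> complex) \<Rightarrow> complex" where
  "circ_int f = integral\<^sup>L circ_meas f"

definition fourier_coeff :: "(real \<Rightarrow> complex) \<Rightarrow> int \<Rightarrow> complex" where
  "fourier_coeff f n = circ_int (\<lambda>\<theta>. f \<theta> * cis (- 2 * pi * of_int n * \<theta>))"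

definition in_L2 :: "(real \<Rightarrow> complex) \<Rightarrow> bool" where
  "in_L2 f \<longleftrightarrow> f \<in> borel_measurable circ_meas \<and>
     integrable circ_meas (\<lambda>\<theta>. (cmod (f \<theta>))\<^sup>2)"

definition L2_norm :: "(real \<Rightarrow> complex) \<Rightarrow> real" where
  "L2_norm f = sqrt (integral\<^sup>L circ_meas (\<lambda>\<theta>. (cmod (f \<theta>))\<^sup>2))"

definition H2_D :: "(real \<Rightarrow> complex) \<Rightarrow> bool" where
  "H2_D f \<longleftrightarrow> in_L2 f \<and> (\<forall>n<0. fourier_coeff f n = 0)"

text \<open>H^2(D^*): f with f^* in H^2(D); on T, f^* is the complex conjugate of f.\<close>
definition H2_Dstar :: "(real \<Rightarrow> complex) \<Rightarrow> bool" where
  "H2_Dstar f \<longleftrightarrow> H2_D (\<lambda>\<theta>. cnj (f \<theta>))"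

text \<open>For f in H^2(D^*), f(infinity) = integral of f over T.\<close>
definition at_infty :: "(real \<Rightarrow> complex) \<Rightarrow> complex" where
  "at_infty f = circ_int f"

type_synonym circ_pair = "(real \<Rightarrow> complex) \<times> (real \<Rightarrow> complex)"

definition in_Lspace :: "circ_pair \<Rightarrow> bool" where
  "in_Lspace p \<longleftrightarrow> (case p of (a, b) \<Rightarrow>
     a \<in> borel_measurable circ_meas \<and> b \<in> borel_measurable circ_meas \<and>
     (AE \<theta> in circ_meas. a \<theta> * cnj (a \<theta>) + b \<theta> * cnj (b \<theta>) = 1) \<and>
     H2_Dstar a \<and> at_infty a \<in> \<real> \<and> Re (at_infty a) > 0)"

definition in_Hbar :: "circ_pair \<Rightarrow> bool" where
  "in_Hbar p \<longleftrightarrow> in_Lspace p \<and> H2_D (snd p)"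

definition rho :: "circ_pair \<Rightarrow> circ_pair \<Rightarrow> real" where
  "rho p q = L2_norm (\<lambda>\<theta>. fst p \<theta> - fst q \<theta>) + L2_norm (\<lambda>\<theta>. snd p \<theta> - snd q \<theta>)
     + \<bar>ln (Re (at_infty (fst p))) - ln (Re (at_infty (fst q)))\<bar>"

text \<open>Pair product (a,b)(c,d) = (a c - b d^*, a d + b c^*), evaluated on T where g^* = conj g.\<close>
definition pair_mult :: "circ_pair \<Rightarrow> circ_pair \<Rightarrow> circ_pair" where
  "pair_mult p q = (\<lambda>\<theta>. fst p \<theta> * fst q \<theta> - snd p \<theta> * cnj (snd q \<theta>),
                    \<lambda>\<theta>. fst p \<theta> * snd q \<theta> + snd p \<theta> * cnj (fst q \<theta>))"

definition layer_const :: "(int \<Rightarrow> complex) \<Rightarrow> nat \<Rightarrow> real" where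
  "layer_const F k = 1 / sqrt (1 + (cmod (F (int k)))\<^sup>2)"

definition layer :: "(int \<Rightarrow> complex) \<Rightarrow> nat \<Rightarrow> circ_pair" where
  "layer F k = (\<lambda>\<theta>. complex_of_real (layer_const F k),
                \<lambda>\<theta>. complex_of_real (layer_const F k) * F (int k) * cis (2 * pi * real k * \<theta>))"

primrec nlft_partial :: "(int \<Rightarrow> complex) \<Rightarrow> nat \<Rightarrow> circ_pair" where
  "nlft_partial F 0 = layer F 0"
| "nlft_partial F (Suc k) = pair_mult (nlft_partial F k) (layer F (Suc k))"

end

theory Submission
  imports Defs
begin

lemma cis_exp: "cis x = exp (\<i> * complex_of_real x)"
  by (simp add: cis_conv_exp mult.commute)

lemma circ_int_cis:
  fixes n :: int
  shows "circ_int (\<lambda>\<theta>. cis (2 * pi * of_int n * \<theta>)) = (if n = 0 then 1 else 0)"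
proof -
  have cont: "continuous_on {0..1} (\<lambda>\<theta>::real. cis (2 * pi * of_int n * \<theta>))"
    by (intro continuous_intros)
  have "circ_int (\<lambda>\<theta>. cis (2 * pi * of_int n * \<theta>)) = integral {0..1} (\<lambda>\<theta>. cis (2 * pi * of_int n * \<theta>))"
    unfolding circ_int_def
    by (rule lebesgue_integral_eq_integral[OF continuous_imp_integrable_real[OF cont]]) auto
  also have "\<dots> = (if n = 0 then 1 else 0)"
  proof (cases "n = 0")
    case True then show ?thesis by simp
  next
    case False
    define c where "c = 2 * pi * of_int n * \<i>"
    have c0: "c \<noteq> 0" using False by (simp add: c_def)
    have d: "((\<lambda>\<theta>. exp (c * complex_of_real \<theta>) / c) has_vector_derivative cis (2 * pi * of_int n * \<theta>)) (at \<theta> within {0..1})" for \<theta>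
    proof -
      have "((\<lambda>\<theta>. exp (\<theta> *\<^sub>R c) * (1/c)) has_vector_derivative (exp (\<theta> *\<^sub>R c) * c * (1/ c))) (at \<theta> within {0..1})"
        by (rule has_vector_derivative_mult_left exp_scaleR_has_vector_derivative_right)+
      then have "((\<lambda>\<theta>. exp (c * complex_of_real \<theta>) / c) has_vector_derivative (exp (c * complex_of_real \<theta>) * c / c)) (at \<theta> within {0..1})"
        by (simp add: scaleR_conv_of_real mult.commute)
      moreover have "exp (c * complex_of_real \<theta>) * c / c = cis (2 * pi * of_int n * \<theta>)"
        using c0 by (simp add: c_def cis_exp mult_ac)
      ultimately show ?thesis by simp
    qed
    have "((\<lambda>\<theta>. cis (2 * pi * of_int n * \<theta>)) has_integral (exp (c * complex_of_real 1) / c - exp (c * complex_of_real 0) / c)) {0..1}"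
      by (rule fundamental_theorem_of_calculus) (use d in auto)
    moreover have "exp (c * complex_of_real 1) = 1"
      unfolding c_def by (simp add: exp_eq_1)
    ultimately show ?thesis using False by (simp add: integral_unique)
  qed
  finally show ?thesis .
qed


definition tp :: "int \<Rightarrow> int \<Rightarrow> (real \<Rightarrow> complex) \<Rightarrow> bool" where
  "tp lo hi f \<longleftrightarrow> (\<exists>c. f = (\<lambda>\<theta>. \<Sum>n\<in>{lo..hi}. c n * cis (2 * pi * of_int n * \<theta>)))"

lemma tp_zero: "tp lo hi (\<lambda>_. 0)"
  unfolding tp_def by (rule exI[of _ "\<lambda>_. 0"]) simp

lemma tp_const: "tp 0 0 (\<lambda>_. c)"
  unfolding tp_def by (rule exI[of _ "\<lambda>_. c"]) simp

lemma tp_mono: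
  assumes "tp lo hi f" "lo' \<le> lo" "hi \<le> hi'"
  shows "tp lo' hi' f"
proof -
  obtain c where f: "f = (\<lambda>\<theta>. \<Sum>n\<in>{lo..hi}. c n * cis (2 * pi * of_int n * \<theta>))"
    using assms(1) unfolding tp_def by blast
  have "f = (\<lambda>\<theta>. \<Sum>n\<in>{lo'..hi'}. (if n \<in> {lo..hi} then c n else 0) * cis (2 * pi * of_int n * \<theta>))"
  proof
    fix \<theta>
    have "(\<Sum>n\<in>{lo'..hi'}. (if n \<in> {lo..hi} then c n else 0) * cis (2 * pi * of_int n * \<theta>))
        = (\<Sum>n\<in>{lo'..hi'}. (if n \<in> {lo..hi} then c n * cis (2 * pi * of_int n * \<theta>) else 0))"
      by (rule sum.cong) auto
    also have "\<dots> = (\<Sum>n\<in>{lo'..hi'} \<inter> {lo..hi}. c n * cis (2 * pi * of_int n * \<theta>))"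
      by (rule sum.inter_restrict[symmetric]) simp
    also have "{lo'..hi'} \<inter> {lo..hi} = {lo..hi}" using assms by auto
    finally show "f \<theta> = (\<Sum>n\<in>{lo'..hi'}. (if n \<in> {lo..hi} then c n else 0) * cis (2 * pi * of_int n * \<theta>))"
      by (simp add: f)
  qed
  then show ?thesis unfolding tp_def by (intro exI[of _ "\<lambda>n. if n \<in> {lo..hi} then c n else 0"])
qed

lemma tp_add:
  assumes "tp lo hi f" "tp lo hi g"
  shows "tp lo hi (\<lambda>\<theta>. f \<theta> + g \<theta>)"
proof -
  obtain c where f: "f = (\<lambda>\<theta>. \<Sum>n\<in>{lo..hi}. c n * cis (2 * pi * of_int n * \<theta>))"
    using assms(1) unfolding tp_def by blast
  obtain d where g: "g = (\<lambda>\<theta>. \<Sum>n\<in>{lo..hi}. d n * cis (2 * pi * of_int n * \<theta>))"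
    using assms(2) unfolding tp_def by blast
  show ?thesis unfolding tp_def
    by (rule exI[of _ "\<lambda>n. c n + d n"]) (simp add: f g distrib_right sum.distrib)
qed

lemma tp_cmult:
  assumes "tp lo hi f"
  shows "tp lo hi (\<lambda>\<theta>. k * f \<theta>)"
proof -
  obtain c where f: "f = (\<lambda>\<theta>. \<Sum>n\<in>{lo..hi}. c n * cis (2 * pi * of_int n * \<theta>))"
    using assms(1) unfolding tp_def by blast
  show ?thesis unfolding tp_def
    by (rule exI[of _ "\<lambda>n. k * c n"]) (simp add: f sum_distrib_left mult.assoc)
qed

lemma tp_diff:
  assumes "tp lo hi f" "tp lo hi g"
  shows "tp lo hi (\<lambda>\<theta>. f \<theta> - g \<theta>)"
  using tp_add[OF assms(1) tp_cmult[OF assms(2), of "-1"]] by simp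

lemma tp_shift:
  assumes "tp lo hi f"
  shows "tp (lo + j) (hi + j) (\<lambda>\<theta>. f \<theta> * cis (2 * pi * of_int j * \<theta>))"
proof -
  obtain c where f: "f = (\<lambda>\<theta>. \<Sum>n\<in>{lo..hi}. c n * cis (2 * pi * of_int n * \<theta>))"
    using assms(1) unfolding tp_def by blast
  have "(\<lambda>\<theta>. f \<theta> * cis (2 * pi * of_int j * \<theta>)) = (\<lambda>\<theta>. \<Sum>n\<in>{lo+j..hi+j}. c (n - j) * cis (2 * pi * of_int n * \<theta>))"
  proof
    fix \<theta>
    have "f \<theta> * cis (2 * pi * of_int j * \<theta>) = (\<Sum>n\<in>{lo..hi}. c n * cis (2 * pi * of_int (n + j) * \<theta>))"
      by (simp add: f sum_distrib_right mult.assoc cis_mult distrib_right distrib_left)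
    also have "\<dots> = (\<Sum>n\<in>{lo+j..hi+j}. c (n - j) * cis (2 * pi * of_int n * \<theta>))"
      by (rule sum.reindex_bij_witness[of _ "\<lambda>n. n - j" "\<lambda>n. n + j"]) auto
    finally show "f \<theta> * cis (2 * pi * of_int j * \<theta>) = (\<Sum>n\<in>{lo+j..hi+j}. c (n - j) * cis (2 * pi * of_int n * \<theta>))" .
  qed
  then show ?thesis unfolding tp_def by (intro exI[of _ "\<lambda>n. c (n - j)"])
qed

lemma tp_cnj:
  assumes "tp lo hi f"
  shows "tp (-hi) (-lo) (\<lambda>\<theta>. cnj (f \<theta>))"
proof -
  obtain c where f: "f = (\<lambda>\<theta>. \<Sum>n\<in>{lo..hi}. c n * cis (2 * pi * of_int n * \<theta>))"
    using assms(1) unfolding tp_def by blast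
  have "(\<lambda>\<theta>. cnj (f \<theta>)) = (\<lambda>\<theta>. \<Sum>n\<in>{-hi..-lo}. cnj (c (- n)) * cis (2 * pi * of_int n * \<theta>))"
  proof
    fix \<theta>
    have "cnj (f \<theta>) = (\<Sum>n\<in>{lo..hi}. cnj (c n) * cis (2 * pi * of_int (- n) * \<theta>))"
      by (simp add: f cis_cnj)
    also have "\<dots> = (\<Sum>n\<in>{-hi..-lo}. cnj (c (- n)) * cis (2 * pi * of_int n * \<theta>))"
      by (rule sum.reindex_bij_witness[of _ "\<lambda>n. - n" "\<lambda>n. - n"]) auto
    finally show "cnj (f \<theta>) = (\<Sum>n\<in>{-hi..-lo}. cnj (c (- n)) * cis (2 * pi * of_int n * \<theta>))" .
  qed
  then show ?thesis unfolding tp_def by (intro exI[of _ "\<lambda>n. cnj (c (- n))"])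
qed

lemma tp_cont:
  assumes "tp lo hi f"
  shows "continuous_on A f"
proof -
  obtain c where f: "f = (\<lambda>\<theta>. \<Sum>n\<in>{lo..hi}. c n * cis (2 * pi * of_int n * \<theta>))"
    using assms(1) unfolding tp_def by blast
  show ?thesis unfolding f by (intro continuous_intros)
qed

lemma cont_integrable: "continuous_on {0..1} f \<Longrightarrow> integrable circ_meas (f :: real \<Rightarrow> 'b::euclidean_space)"
  by (rule continuous_imp_integrable_real)

lemma cont_measurable: "continuous_on {0..1} f \<Longrightarrow> (f :: real \<Rightarrow> 'b::euclidean_space) \<in> borel_measurable circ_meas"
  by (rule continuous_imp_measurable_on_sets_lebesgue) auto

lemma circ_int_cis_mult:
  "circ_int (\<lambda>\<theta>. k * cis (2 * pi * of_int n * \<theta>)) = (if n = 0 then k else 0)"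
  using circ_int_cis[of n] unfolding circ_int_def by simp

lemma tp_int:
  assumes "tp lo hi f" "0 < lo \<or> hi < 0"
  shows "circ_int f = 0"
proof -
  obtain c where f: "f = (\<lambda>\<theta>. \<Sum>n\<in>{lo..hi}. c n * cis (2 * pi * of_int n * \<theta>))"
    using assms(1) unfolding tp_def by blast
  have "circ_int f = (\<Sum>n\<in>{lo..hi}. circ_int (\<lambda>\<theta>. c n * cis (2 * pi * of_int n * \<theta>)))"
    unfolding f circ_int_def
    by (rule Bochner_Integration.integral_sum) (intro cont_integrable continuous_intros)
  also have "\<dots> = 0"
    using assms(2) by (intro sum.neutral) (auto simp: circ_int_cis_mult)
  finally show ?thesis .
qed


lemma pair_mult_assoc: "pair_mult (pair_mult p q) r = pair_mult p (pair_mult q r)"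
  unfolding pair_mult_def by (auto simp: algebra_simps fun_eq_iff)

lemma cmod_sq: "(cmod z)\<^sup>2 = Re z * Re z + Im z * Im z"
  unfolding cmod_power2 by (simp add: power2_eq_square)

lemma unit_ident:
  fixes a b c d :: complex
  shows "(cmod (a*c - b*cnj d))\<^sup>2 + (cmod (a*d + b*cnj c))\<^sup>2 = ((cmod a)\<^sup>2 + (cmod b)\<^sup>2) * ((cmod c)\<^sup>2 + (cmod d)\<^sup>2)"
  unfolding cmod_sq by (simp add: algebra_simps)

definition unitp :: "circ_pair \<Rightarrow> bool" where
  "unitp p \<longleftrightarrow> (\<forall>\<theta>. (cmod (fst p \<theta>))\<^sup>2 + (cmod (snd p \<theta>))\<^sup>2 = 1)"

lemma unitp_mult: "unitp p \<Longrightarrow> unitp q \<Longrightarrow> unitp (pair_mult p q)"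
  unfolding unitp_def pair_mult_def by (simp add: unit_ident)

lemma layer_const_pos: "layer_const F k > 0"
  unfolding layer_const_def by (simp add: add_pos_nonneg)

lemma layer_const_le1: "layer_const F k \<le> 1"
proof -
  have "1 \<le> sqrt (1 + (cmod (F (int k)))\<^sup>2)" by simp
  then show ?thesis unfolding layer_const_def
    by (metis divide_le_eq_1 less_eq_real_def zero_less_one order_less_le_trans)
qed

lemma layer_const_sq: "(layer_const F k)\<^sup>2 * (1 + (cmod (F (int k)))\<^sup>2) = 1"
proof -
  define X where "X = 1 + (cmod (F (int k)))\<^sup>2"
  have h: "0 < X" unfolding X_def by (simp add: add_pos_nonneg)
  have s: "(sqrt X)\<^sup>2 = X"
    using h by simp
  have "(1 / sqrt X)\<^sup>2 * X = 1" unfolding power_divide s using h by simp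
  then show ?thesis unfolding layer_const_def X_def .
qed

lemma unitp_layer: "unitp (layer F k)"
  unfolding unitp_def layer_def using layer_const_sq[of F k]
  by (simp add: norm_mult power_mult_distrib algebra_simps)

lemma cnj_cis_k: "cnj (cis (2 * pi * real k * \<theta>)) = cis (2 * pi * of_int (- int k) * \<theta>)"
  by (simp add: cis_cnj)

lemma step:
  assumes e: "tp (- int m) 0 e" and f: "tp lo (int m) f" and lo: "0 \<le> lo" "lo \<le> 1"
  shows "tp (- int (Suc m)) 0 (fst (pair_mult (e,f) (layer F (Suc m))))"
    "tp lo (int (Suc m)) (snd (pair_mult (e,f) (layer F (Suc m))))"
    "circ_int (fst (pair_mult (e,f) (layer F (Suc m)))) = complex_of_real (layer_const F (Suc m)) * circ_int e"
proof -
  define C where "C = complex_of_real (layer_const F (Suc m))"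
  define G where "G = F (int (Suc m))"
  define j where "j = int (Suc m)"
  have fst_eq: "fst (pair_mult (e,f) (layer F (Suc m))) = (\<lambda>\<theta>. C * e \<theta> - (C * cnj G) * (f \<theta> * cis (2 * pi * of_int (- j) * \<theta>)))"
    unfolding fun_eq_iff pair_mult_def layer_def fst_conv snd_conv complex_cnj_mult complex_cnj_complex_of_real cnj_cis_k
    by (simp add: C_def G_def j_def mult_ac)
  have snd_eq: "snd (pair_mult (e,f) (layer F (Suc m))) = (\<lambda>\<theta>. (C * G) * (e \<theta> * cis (2 * pi * of_int j * \<theta>)) + C * f \<theta>)"
    by (simp add: pair_mult_def layer_def fun_eq_iff C_def G_def j_def mult_ac)
  have fs: "tp (lo + - j) (int m + - j) (\<lambda>\<theta>. f \<theta> * cis (2 * pi * of_int (- j) * \<theta>))"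
    by (rule tp_shift[OF f])
  have es: "tp (- int m + j) (0 + j) (\<lambda>\<theta>. e \<theta> * cis (2 * pi * of_int j * \<theta>))"
    by (rule tp_shift[OF e])
  show "tp (- int (Suc m)) 0 (fst (pair_mult (e,f) (layer F (Suc m))))"
    unfolding fst_eq
    by (intro tp_diff tp_cmult tp_mono[OF fs] tp_mono[OF e]) (use lo in \<open>auto simp: j_def\<close>)
  show "tp lo (int (Suc m)) (snd (pair_mult (e,f) (layer F (Suc m))))"
    unfolding snd_eq
    by (intro tp_add tp_cmult tp_mono[OF es] tp_mono[OF f]) (use lo in \<open>auto simp: j_def\<close>)
  have z: "circ_int (\<lambda>\<theta>. f \<theta> * cis (2 * pi * of_int (- j) * \<theta>)) = 0"
    by (rule tp_int[OF fs]) (simp add: j_def)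
  have ie: "integrable circ_meas e" by (rule cont_integrable, rule tp_cont[OF e])
  have if': "integrable circ_meas (\<lambda>\<theta>. f \<theta> * cis (2 * pi * of_int (- j) * \<theta>))"
    by (rule cont_integrable, rule tp_cont[OF fs])
  show "circ_int (fst (pair_mult (e,f) (layer F (Suc m)))) = complex_of_real (layer_const F (Suc m)) * circ_int e"
    unfolding fst_eq using z ie if' by (simp add: circ_int_def C_def)
qed


lemma meas01[simp]: "Sigma_Algebra.measure circ_meas {0..1} = 1"
  by (simp add: measure_restrict_space)

lemma circ_int_const: "circ_int (\<lambda>_. c) = c"
  using circ_int_cis_mult[of c 0] by simp

lemma real_int_const: "integral\<^sup>L circ_meas (\<lambda>_. c::real) = c"
  by simp

lemma nlft_tp: "tp (- int k) 0 (fst (nlft_partial F k)) \<and> tp 0 (int k) (snd (nlft_partial F k)) \<and>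
   circ_int (fst (nlft_partial F k)) = complex_of_real (\<Prod>j\<le>k. layer_const F j)"
proof (induction k)
  case 0
  have l0: "layer F 0 = (\<lambda>_. complex_of_real (layer_const F 0), \<lambda>_. complex_of_real (layer_const F 0) * F 0)"
    by (simp add: layer_def)
  show ?case by (simp add: l0 tp_const circ_int_const)
next
  case (Suc k)
  let ?p = "nlft_partial F k"
  have e: "nlft_partial F (Suc k) = pair_mult (fst ?p, snd ?p) (layer F (Suc k))" by simp
  have "tp (- int k) 0 (fst ?p)" "tp 0 (int k) (snd ?p)" using Suc.IH by auto
  note st = step[OF this(1) this(2), of F, simplified]
  show ?case unfolding e using st Suc.IH by (simp add: mult.commute)
qed

lemma nlft_unitp: "unitp (nlft_partial F k)"
  by (induction k) (auto intro: unitp_mult unitp_layer)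

primrec tail :: "(int \<Rightarrow> complex) \<Rightarrow> nat \<Rightarrow> nat \<Rightarrow> circ_pair" where
  "tail F k 0 = (\<lambda>_. 1, \<lambda>_. 0)"
| "tail F k (Suc d) = pair_mult (tail F k d) (layer F (Suc (k + d)))"

lemma tail_tp: "tp (- int (k + d)) 0 (fst (tail F k d)) \<and> tp 1 (int (k + d)) (snd (tail F k d)) \<and>
   circ_int (fst (tail F k d)) = complex_of_real (\<Prod>j\<in>{Suc k..k+d}. layer_const F j)"
proof (induction d)
  case 0
  show ?case by (auto simp: circ_int_const tp_zero intro: tp_mono[OF tp_const])
next
  case (Suc d)
  let ?p = "tail F k d"
  have e: "tail F k (Suc d) = pair_mult (fst ?p, snd ?p) (layer F (Suc (k + d)))" by simp
  have "tp (- int (k + d)) 0 (fst ?p)" "tp 1 (int (k + d)) (snd ?p)" using Suc.IH by auto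
  note st = step[OF this(1) this(2), of F, simplified]
  have pr: "(\<Prod>j\<in>{Suc k..Suc (k+d)}. layer_const F j) = (\<Prod>j\<in>{Suc k..k+d}. layer_const F j) * layer_const F (Suc (k + d))"
    by (simp add: atLeastAtMostSuc_conv mult.commute)
  show ?case unfolding e using st Suc.IH by (simp add: pr mult.commute)
qed

lemma tail_unitp: "unitp (tail F k d)"
proof (induction d)
  case 0 then show ?case by (simp add: unitp_def)
next
  case (Suc d) then show ?case by (auto intro: unitp_mult unitp_layer)
qed

lemma pair_mult_one: "pair_mult p (\<lambda>_. 1, \<lambda>_. 0) = p"
  by (simp add: pair_mult_def)

lemma nlft_tail: "nlft_partial F (k + d) = pair_mult (nlft_partial F k) (tail F k d)"
proof (induction d)
  case 0 then show ?case by (simp add: pair_mult_one)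
next
  case (Suc d)
  then show ?case by (simp add: pair_mult_assoc)
qed

lemma dist_alg:
  fixes a b e f :: complex
  assumes "(cmod a)\<^sup>2 + (cmod b)\<^sup>2 = 1" "(cmod e)\<^sup>2 + (cmod f)\<^sup>2 = 1"
  shows "(cmod ((a*e - b*cnj f) - a))\<^sup>2 + (cmod ((a*f + b*cnj e) - b))\<^sup>2 = 2 - 2 * Re e"
proof -
  have "(cmod ((a*e - b*cnj f) - a))\<^sup>2 + (cmod ((a*f + b*cnj e) - b))\<^sup>2
      = (cmod (a*(e-1) - b*cnj f))\<^sup>2 + (cmod (a*f + b*cnj (e-1)))\<^sup>2"
    by (simp add: algebra_simps)
  also have "\<dots> = (cmod (e-1))\<^sup>2 + (cmod f)\<^sup>2" using unit_ident[of a "e-1" b f] assms(1) by simp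
  also have "\<dots> = ((cmod e)\<^sup>2 + (cmod f)\<^sup>2) + 1 - 2 * Re e" unfolding cmod_sq by (simp add: algebra_simps)
  finally show ?thesis using assms(2) by simp
qed

definition pc :: "(int \<Rightarrow> complex) \<Rightarrow> nat \<Rightarrow> real" where
  "pc F k = (\<Prod>j\<le>k. layer_const F j)"

lemma dist_pt:
  "(cmod (fst (nlft_partial F (k+d)) \<theta> - fst (nlft_partial F k) \<theta>))\<^sup>2
   + (cmod (snd (nlft_partial F (k+d)) \<theta> - snd (nlft_partial F k) \<theta>))\<^sup>2
   = 2 - 2 * Re (fst (tail F k d) \<theta>)"
proof -
  have u1: "(cmod (fst (nlft_partial F k) \<theta>))\<^sup>2 + (cmod (snd (nlft_partial F k) \<theta>))\<^sup>2 = 1"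
    using nlft_unitp[of F k] unfolding unitp_def by blast
  have u2: "(cmod (fst (tail F k d) \<theta>))\<^sup>2 + (cmod (snd (tail F k d) \<theta>))\<^sup>2 = 1"
    using tail_unitp[of F k d] unfolding unitp_def by blast
  show ?thesis unfolding nlft_tail using dist_alg[OF u1 u2] by (simp add: pair_mult_def)
qed

lemma dist_int:
  "integral\<^sup>L circ_meas (\<lambda>\<theta>. (cmod (fst (nlft_partial F (k+d)) \<theta> - fst (nlft_partial F k) \<theta>))\<^sup>2
   + (cmod (snd (nlft_partial F (k+d)) \<theta> - snd (nlft_partial F k) \<theta>))\<^sup>2)
   = 2 - 2 * (\<Prod>j\<in>{Suc k..k+d}. layer_const F j)"
proof -
  have t: "tp (- int (k + d)) 0 (fst (tail F k d))" using tail_tp by blast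
  have i: "integrable circ_meas (fst (tail F k d))" by (rule cont_integrable, rule tp_cont[OF t])
  have "integral\<^sup>L circ_meas (\<lambda>\<theta>. 2 - 2 * Re (fst (tail F k d) \<theta>)) = 2 - 2 * Re (circ_int (fst (tail F k d)))"
    using i by (simp add: circ_int_def)
  then show ?thesis unfolding dist_pt using tail_tp[of k d F] by (simp del: of_real_prod)
qed


lemma sqrt_bound: "0 \<le> (x::real) \<Longrightarrow> 1 - 1 / sqrt (1 + x) \<le> x"
proof -
  assume x: "0 \<le> x"
  define s where "s = sqrt (1 + x)"
  have s1: "1 \<le> s" unfolding s_def using x by simp
  have "1 + x \<le> (1 + x)\<^sup>2" using x by (simp add: power2_eq_square algebra_simps)
  then have "sqrt (1 + x) \<le> sqrt ((1 + x)\<^sup>2)" by (rule real_sqrt_le_mono)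
  then have "s \<le> 1 + x" unfolding s_def using x by simp
  moreover have "1 - 1 / s \<le> s - 1"
  proof -
    have "1 - 1 / s = (s - 1) / s" using s1 by (simp add: field_simps)
    also have "\<dots> \<le> s - 1" using s1 by (simp add: divide_le_eq mult_le_cancel_left1)
    finally show ?thesis .
  qed
  ultimately show ?thesis unfolding s_def by linarith
qed

lemma conv_prod:
  assumes "summable (\<lambda>n. (cmod (F (int n)))\<^sup>2)"
  shows "convergent_prod (layer_const F)"
proof -
  have "summable (\<lambda>k. \<bar>layer_const F k - 1\<bar>)"
  proof (rule summable_comparison_test[OF _ assms])
    have "norm \<bar>layer_const F n - 1\<bar> \<le> (cmod (F (int n)))\<^sup>2" for n
    proof -
      have "norm \<bar>layer_const F n - 1\<bar> = 1 - layer_const F n" using layer_const_le1[of F n] by simp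
      also have "\<dots> \<le> (cmod (F (int n)))\<^sup>2" using sqrt_bound[of "(cmod (F (int n)))\<^sup>2"] unfolding layer_const_def by simp
      finally show ?thesis .
    qed
    then show "\<exists>N. \<forall>n\<ge>N. norm \<bar>layer_const F n - 1\<bar> \<le> (cmod (F (int n)))\<^sup>2" by blast
  qed
  moreover have "layer_const F k - 1 \<noteq> -1" for k using layer_const_pos[of F k] by simp
  ultimately have "convergent_prod (\<lambda>k. 1 + (layer_const F k - 1))"
    by (rule summable_imp_convergent_prod_real)
  then show ?thesis by simp
qed

lemma pc_pos: "pc F k > 0"
  unfolding pc_def by (rule prod_pos) (simp add: layer_const_pos)

lemma pc_Suc: "pc F (Suc k) = pc F k * layer_const F (Suc k)"
  unfolding pc_def by (simp add: atMost_Suc mult.commute)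

lemma pc_decseq: "decseq (pc F)"
proof (rule decseq_SucI)
  fix k
  show "pc F (Suc k) \<le> pc F k"
    unfolding pc_Suc using pc_pos[of F k] layer_const_le1[of F "Suc k"]
    by (simp add: mult_le_cancel_left1)
qed

lemma pc_split: "pc F (k + d) = pc F k * (\<Prod>j\<in>{Suc k..k+d}. layer_const F j)"
proof (induction d)
  case 0 then show ?case by simp
next
  case (Suc d)
  have "(\<Prod>j\<in>{Suc k..Suc (k+d)}. layer_const F j) = (\<Prod>j\<in>{Suc k..k+d}. layer_const F j) * layer_const F (Suc (k + d))"
    by (simp add: atLeastAtMostSuc_conv mult.commute)
  then show ?case using Suc by (simp add: pc_Suc)
qed

lemma tailprod: "(\<Prod>j\<in>{Suc k..k+d}. layer_const F j) = pc F (k + d) / pc F k"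
  using pc_split[of F k d] pc_pos[of F k] by simp

lemma pc_lim:
  assumes "summable (\<lambda>n. (cmod (F (int n)))\<^sup>2)"
  shows "pc F \<longlonglongrightarrow> prodinf (layer_const F)" "prodinf (layer_const F) > 0"
    "\<And>k. prodinf (layer_const F) \<le> pc F k"
    "layer_const F has_prod prodinf (layer_const F)"
proof -
  have cp: "convergent_prod (layer_const F)" by (rule conv_prod[OF assms])
  show l: "pc F \<longlonglongrightarrow> prodinf (layer_const F)"
    using convergent_prod_LIMSEQ[OF cp] unfolding pc_def .
  have "prodinf (layer_const F) \<noteq> 0"
    by (rule prodinf_nonzero[OF cp]) (simp add: layer_const_pos less_imp_neq[symmetric])
  moreover have "prodinf (layer_const F) \<ge> 0"
    by (rule LIMSEQ_le_const[OF l]) (auto intro: less_imp_le pc_pos)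
  ultimately show "prodinf (layer_const F) > 0" by simp
  show "\<And>k. prodinf (layer_const F) \<le> pc F k"
    by (rule decseq_ge[OF pc_decseq l])
  show "layer_const F has_prod prodinf (layer_const F)"
    using cp convergent_prod_has_prod_iff by blast
qed


lemma A_tp: "tp (- int k) 0 (fst (nlft_partial F k))" using nlft_tp by blast
lemma B_tp: "tp 0 (int k) (snd (nlft_partial F k))" using nlft_tp by blast
lemma A_int: "circ_int (fst (nlft_partial F k)) = complex_of_real (pc F k)"
  using nlft_tp unfolding pc_def by blast

lemma A_cont: "continuous_on S (fst (nlft_partial F k))" by (rule tp_cont[OF A_tp])
lemma B_cont: "continuous_on S (snd (nlft_partial F k))" by (rule tp_cont[OF B_tp])

lemma AB_sq: "(cmod (fst (nlft_partial F k) \<theta>))\<^sup>2 + (cmod (snd (nlft_partial F k) \<theta>))\<^sup>2 = 1"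
  using nlft_unitp[of F k] unfolding unitp_def by blast

lemma sq_sum_le:
  fixes x y :: real
  assumes "x\<^sup>2 + y\<^sup>2 = 1" "0 \<le> x"
  shows "x \<le> 1"
proof -
  have "0 \<le> y\<^sup>2" by simp
  then have "x\<^sup>2 \<le> 1" using assms(1) by linarith
  then show ?thesis using assms(2) by (simp add: power_le_one_iff)
qed

lemma A_le1: "cmod (fst (nlft_partial F k) \<theta>) \<le> 1"
  by (rule sq_sum_le[OF AB_sq]) simp

lemma B_le1: "cmod (snd (nlft_partial F k) \<theta>) \<le> 1"
  by (rule sq_sum_le[where y="cmod (fst (nlft_partial F k) \<theta>)"]) (use AB_sq[of F k \<theta>] in auto)

definition sp :: "(int \<Rightarrow> complex) \<Rightarrow> nat \<Rightarrow> real \<Rightarrow> complex \<times> complex" where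
  "sp F n \<theta> = (fst (nlft_partial F n) \<theta>, snd (nlft_partial F n) \<theta>)"

lemma sp_norm: "norm (sp F n \<theta>) = 1"
  unfolding sp_def norm_Pair using AB_sq[of F n \<theta>] by simp

lemma sp_cont: "continuous_on S (sp F n)"
  unfolding sp_def by (intro continuous_on_Pair A_cont B_cont)

lemma sp_meas: "sp F n \<in> borel_measurable circ_meas"
  by (rule cont_measurable[OF sp_cont])

lemma sp_integrable: "integrable circ_meas (sp F n)"
  by (rule cont_integrable[OF sp_cont])

lemma sp_dist_sq: "(norm (sp F i \<theta> - sp F j \<theta>))\<^sup>2 =
   (cmod (fst (nlft_partial F i) \<theta> - fst (nlft_partial F j) \<theta>))\<^sup>2
   + (cmod (snd (nlft_partial F i) \<theta> - snd (nlft_partial F j) \<theta>))\<^sup>2"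
  unfolding sp_def by (simp add: norm_Pair)

lemma Dint_le:
  assumes "summable (\<lambda>n. (cmod (F (int n)))\<^sup>2)"
  shows "integral\<^sup>L circ_meas (\<lambda>\<theta>. (norm (sp F i \<theta> - sp F j \<theta>))\<^sup>2)
     \<le> 2 - 2 * prodinf (layer_const F) / pc F (min i j)"
proof -
  have gen: "integral\<^sup>L circ_meas (\<lambda>\<theta>. (norm (sp F (k + d) \<theta> - sp F k \<theta>))\<^sup>2)
     \<le> 2 - 2 * prodinf (layer_const F) / pc F k" for k d
  proof -
    have "integral\<^sup>L circ_meas (\<lambda>\<theta>. (norm (sp F (k + d) \<theta> - sp F k \<theta>))\<^sup>2)
       = 2 - 2 * (pc F (k + d) / pc F k)"
      unfolding sp_dist_sq dist_int tailprod ..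
    also have "\<dots> \<le> 2 - 2 * prodinf (layer_const F) / pc F k"
      using pc_lim(3)[OF assms, of "k + d"] pc_pos[of F k]
      by (simp add: divide_right_mono)
    finally show ?thesis .
  qed
  show ?thesis
  proof (cases "i \<le> j")
    case True
    then obtain d where j: "j = i + d" using le_Suc_ex by blast
    have "(\<lambda>\<theta>. (norm (sp F i \<theta> - sp F j \<theta>))\<^sup>2) = (\<lambda>\<theta>. (norm (sp F (i + d) \<theta> - sp F i \<theta>))\<^sup>2)"
      unfolding j by (simp add: norm_minus_commute)
    then show ?thesis using gen[of i d] True by simp
  next
    case False
    then obtain d where i: "i = j + d" using le_Suc_ex nat_le_linear by blast
    show ?thesis using gen[of j d] False unfolding i by simp
  qed
qed


lemma amgm_e: "0 < e \<Longrightarrow> (x::real) \<le> e / 2 + x\<^sup>2 / (2 * e)"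
proof -
  assume e: "0 < e"
  have "0 \<le> (x - e)\<^sup>2" by simp
  then have "2 * e * x \<le> e\<^sup>2 + x\<^sup>2" by (simp add: power2_diff algebra_simps)
  then show ?thesis using e by (simp add: field_simps power2_eq_square)
qed

lemma fm: "finite_measure circ_meas"
  by (rule finite_measure_lebesgue_on) simp

lemma bint:
  fixes f :: "real \<Rightarrow> 'b::{banach, second_countable_topology}"
  assumes "f \<in> borel_measurable circ_meas" "\<And>\<theta>. norm (f \<theta>) \<le> K"
  shows "integrable circ_meas f"
  by (rule finite_measure.integrable_const_bound[OF fm, where B=K]) (use assms in auto)

lemma L1_cauchy:
  assumes S: "summable (\<lambda>n. (cmod (F (int n)))\<^sup>2)" and e: "e > 0"
  shows "\<exists>N. \<forall>i\<ge>N. \<forall>j\<ge>N. LINT \<theta>|circ_meas. norm (sp F i \<theta> - sp F j \<theta>) < e"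
proof -
  let ?P = "prodinf (layer_const F)"
  have P0: "?P > 0" by (rule pc_lim(2)[OF S])
  have "(\<lambda>k. 2 - 2 * ?P / pc F k) \<longlonglongrightarrow> 2 - 2 * ?P / ?P"
    by (intro tendsto_intros pc_lim(1)[OF S]) (use P0 in simp)
  then have t: "(\<lambda>k. 2 - 2 * ?P / pc F k) \<longlonglongrightarrow> 0" using P0 by simp
  have e2: "e\<^sup>2 > 0" using e by simp
  obtain N where N: "\<And>k. k \<ge> N \<Longrightarrow> norm ((2 - 2 * ?P / pc F k) - 0) < e\<^sup>2"
    using LIMSEQ_D[OF t e2] by blast
  show ?thesis
  proof (intro exI allI impI)
    fix i j assume ij: "N \<le> i" "N \<le> j"
    define D where "D = (\<lambda>\<theta>. (norm (sp F i \<theta> - sp F j \<theta>))\<^sup>2)"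
    have Dint: "integrable circ_meas D" unfolding D_def
      by (rule cont_integrable) (intro continuous_intros sp_cont)
    have "integral\<^sup>L circ_meas D \<le> 2 - 2 * ?P / pc F (min i j)"
      unfolding D_def by (rule Dint_le[OF S])
    also have "\<dots> < e\<^sup>2" using N[of "min i j"] ij by simp
    finally have Dl: "integral\<^sup>L circ_meas D < e\<^sup>2" .
    have "(LINT \<theta>|circ_meas. norm (sp F i \<theta> - sp F j \<theta>)) \<le> (LINT \<theta>|circ_meas. e / 2 + D \<theta> / (2 * e))"
    proof (rule integral_mono)
      show "integrable circ_meas (\<lambda>\<theta>. norm (sp F i \<theta> - sp F j \<theta>))"
        by (rule cont_integrable) (intro continuous_intros sp_cont)
      show "integrable circ_meas (\<lambda>\<theta>. e / 2 + D \<theta> / (2 * e))"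
        using Dint by simp
      show "norm (sp F i \<theta> - sp F j \<theta>) \<le> e / 2 + D \<theta> / (2 * e)" for \<theta>
        unfolding D_def by (rule amgm_e[OF e])
    qed
    also have "\<dots> = e / 2 + integral\<^sup>L circ_meas D / (2 * e)"
      using Dint by simp
    also have "\<dots> < e / 2 + e\<^sup>2 / (2 * e)"
      using Dl e by (simp add: divide_strict_right_mono)
    also have "\<dots> = e" using e by (simp add: power2_eq_square)
    finally show "(LINT \<theta>|circ_meas. norm (sp F i \<theta> - sp F j \<theta>)) < e" .
  qed
qed

lemma dct:
  fixes h :: "nat \<Rightarrow> real \<Rightarrow> 'b::{banach, second_countable_topology}"
  assumes "\<And>i. h i \<in> borel_measurable circ_meas" "g \<in> borel_measurable circ_meas"
    "AE \<theta> in circ_meas. (\<lambda>i. h i \<theta>) \<longlonglongrightarrow> g \<theta>" "\<And>i \<theta>. norm (h i \<theta>) \<le> K"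
  shows "(\<lambda>i. integral\<^sup>L circ_meas (h i)) \<longlonglongrightarrow> integral\<^sup>L circ_meas g"
  by (rule integral_dominated_convergence[where w="\<lambda>_. K"]) (use assms in auto)

lemma tp_fourier:
  assumes "tp lo hi f" "n < 0" "0 \<le> lo"
  shows "circ_int (\<lambda>\<theta>. f \<theta> * cis (- 2 * pi * of_int n * \<theta>)) = 0"
proof -
  have "tp (lo + - n) (hi + - n) (\<lambda>\<theta>. f \<theta> * cis (2 * pi * of_int (- n) * \<theta>))"
    by (rule tp_shift[OF assms(1)])
  then have "circ_int (\<lambda>\<theta>. f \<theta> * cis (2 * pi * of_int (- n) * \<theta>)) = 0"
    by (rule tp_int) (use assms in simp)
  then show ?thesis by simp
qed

lemma cnjA_tp: "tp 0 (int k) (\<lambda>\<theta>. cnj (fst (nlft_partial F k) \<theta>))"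
  using tp_cnj[OF A_tp[of k F]] by simp

lemma cont_in_L2: "continuous_on {0..1} f \<Longrightarrow> in_L2 f"
  unfolding in_L2_def by (auto intro!: cont_measurable cont_integrable continuous_intros)

lemma nlft_Lspace: "in_Lspace (nlft_partial F k)"
proof -
  have u: "fst (nlft_partial F k) \<theta> * cnj (fst (nlft_partial F k) \<theta>) + snd (nlft_partial F k) \<theta> * cnj (snd (nlft_partial F k) \<theta>) = 1" for \<theta>
  proof -
    have "complex_of_real ((cmod (fst (nlft_partial F k) \<theta>))\<^sup>2 + (cmod (snd (nlft_partial F k) \<theta>))\<^sup>2) = 1"
      using AB_sq[of F k \<theta>] by simp
    then show ?thesis by (simp add: complex_norm_square[symmetric])
  qed
  have h: "H2_Dstar (fst (nlft_partial F k))"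
    unfolding H2_Dstar_def H2_D_def fourier_coeff_def
  proof (intro conjI allI impI)
    show "in_L2 (\<lambda>\<theta>. cnj (fst (nlft_partial F k) \<theta>))"
      by (rule cont_in_L2) (intro continuous_intros A_cont)
    show "circ_int (\<lambda>\<theta>. cnj (fst (nlft_partial F k) \<theta>) * cis (- 2 * pi * of_int n * \<theta>)) = 0" if "n < 0" for n
      by (rule tp_fourier[OF cnjA_tp that]) simp
  qed
  show ?thesis
    unfolding in_Lspace_def case_prod_beta at_infty_def A_int
    using u h pc_pos[of F k]
    by (auto intro!: cont_measurable A_cont B_cont)
qed


lemma summable_conv:
  assumes "(\<lambda>n. (cmod (F n))\<^sup>2) summable_on UNIV"
  shows "summable (\<lambda>n. (cmod (F (int n)))\<^sup>2)"
proof -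
  have "(\<lambda>n. (cmod (F n))\<^sup>2) summable_on range int"
    by (rule summable_on_subset_banach[OF assms]) simp
  then have "((\<lambda>n. (cmod (F n))\<^sup>2) \<circ> int) summable_on UNIV"
    using summable_on_reindex[of int UNIV "\<lambda>n. (cmod (F n))\<^sup>2"] by simp
  then have "(\<lambda>n. (cmod (F (int n)))\<^sup>2) summable_on UNIV" by (simp add: o_def)
  then show ?thesis by (subst summable_on_UNIV_nonneg_real_iff[symmetric]) auto
qed

lemma norm_diff_sq_le4:
  fixes x y :: "'a::real_normed_vector"
  assumes "norm x \<le> 1" "norm y \<le> 1"
  shows "(norm (x - y))\<^sup>2 \<le> 4"
proof -
  have "norm (x - y) \<le> 2" using norm_triangle_ineq4[of x y] assms by simp
  then have "(norm (x - y))\<^sup>2 \<le> 2\<^sup>2" by (rule power_mono) simp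
  then show ?thesis by simp
qed

theorem theorem6p2:
  fixes F :: "int \<Rightarrow> complex"
  assumes "(\<lambda>n. (cmod (F n))\<^sup>2) summable_on UNIV"
    and "\<forall>n<0. F n = 0"
  shows "(\<forall>k. in_Lspace (nlft_partial F k)) \<and>
    (\<exists>a b. in_Hbar (a, b) \<and>
       (\<lambda>k. rho (nlft_partial F k) (a, b)) \<longlonglongrightarrow> 0 \<and>
       (\<lambda>n. 1 / sqrt (1 + (cmod (F (int n)))\<^sup>2)) has_prod Re (at_infty a))"
proof -
  have S: "summable (\<lambda>n. (cmod (F (int n)))\<^sup>2)" by (rule summable_conv[OF assms(1)])
  define P where "P = prodinf (layer_const F)"
  have P0: "P > 0" unfolding P_def by (rule pc_lim(2)[OF S])
  have Ple: "P \<le> pc F k" for k unfolding P_def by (rule pc_lim(3)[OF S])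
  have pcP: "pc F \<longlonglongrightarrow> P" unfolding P_def by (rule pc_lim(1)[OF S])
  have [measurable]: "sp F i \<in> borel_measurable circ_meas" for i by (rule sp_meas)
  have [measurable]: "fst (nlft_partial F i) \<in> borel_measurable circ_meas" for i by (rule cont_measurable[OF A_cont])
  have [measurable]: "snd (nlft_partial F i) \<in> borel_measurable circ_meas" for i by (rule cont_measurable[OF B_cont])
  obtain r where r: "strict_mono r" "AE \<theta> in circ_meas. Cauchy (\<lambda>i. sp F (r i) \<theta>)"
    using cauchy_L1_AE_cauchy_subseq[OF sp_integrable L1_cauchy[OF S]] by blast
  define L where "L \<theta> = (if Cauchy (\<lambda>i. sp F (r i) \<theta>) then lim (\<lambda>i. sp F (r i) \<theta>) else (1, 0))" for \<theta>
  define a where "a \<theta> = fst (L \<theta>)" for \<theta>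
  define b where "b \<theta> = snd (L \<theta>)" for \<theta>
  have Lmeas[measurable]: "L \<in> borel_measurable circ_meas"
    unfolding L_def by measurable
  have ameas[measurable]: "a \<in> borel_measurable circ_meas" unfolding a_def
    by (rule borel_measurable_continuous_on[OF continuous_on_fst[OF continuous_on_id] Lmeas])
  have bmeas[measurable]: "b \<in> borel_measurable circ_meas" unfolding b_def
    by (rule borel_measurable_continuous_on[OF continuous_on_snd[OF continuous_on_id] Lmeas])
  have cnja_meas[measurable]: "(\<lambda>\<theta>. cnj (a \<theta>)) \<in> borel_measurable circ_meas"
    by (rule borel_measurable_continuous_on[OF _ ameas]) (intro continuous_intros)
  have cis_meas[measurable]: "(\<lambda>\<theta>. cis (- 2 * pi * of_int n * \<theta>)) \<in> borel_measurable circ_meas" for n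
    by (rule cont_measurable) (intro continuous_intros)
  have Lab: "L \<theta> = (a \<theta>, b \<theta>)" for \<theta> by (simp add: a_def b_def)
  have Lconv: "AE \<theta> in circ_meas. (\<lambda>i. sp F (r i) \<theta>) \<longlonglongrightarrow> L \<theta>"
    using r(2)
  proof (rule eventually_mono)
    fix \<theta> assume c: "Cauchy (\<lambda>i. sp F (r i) \<theta>)"
    then have "convergent (\<lambda>i. sp F (r i) \<theta>)" by (rule Cauchy_convergent)
    then show "(\<lambda>i. sp F (r i) \<theta>) \<longlonglongrightarrow> L \<theta>"
      unfolding L_def using c by (simp add: convergent_LIMSEQ_iff)
  qed
  have Lnorm: "norm (L \<theta>) = 1" for \<theta>
  proof (cases "Cauchy (\<lambda>i. sp F (r i) \<theta>)")
    case True
    then have "(\<lambda>i. sp F (r i) \<theta>) \<longlonglongrightarrow> L \<theta>"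
      unfolding L_def using Cauchy_convergent convergent_LIMSEQ_iff by (simp add: Cauchy_convergent_iff convergent_LIMSEQ_iff)
    then have "(\<lambda>i. norm (sp F (r i) \<theta>)) \<longlonglongrightarrow> norm (L \<theta>)" by (rule tendsto_norm)
    then have "(\<lambda>i. 1::real) \<longlonglongrightarrow> norm (L \<theta>)" by (simp add: sp_norm)
    then show ?thesis using LIMSEQ_unique tendsto_const by metis
  next
    case False
    then show ?thesis unfolding L_def by (simp add: norm_Pair)
  qed
  have absq: "(cmod (a \<theta>))\<^sup>2 + (cmod (b \<theta>))\<^sup>2 = 1" for \<theta>
    using Lnorm[of \<theta>] unfolding Lab norm_Pair by simp
  have a_le: "cmod (a \<theta>) \<le> 1" for \<theta> by (rule sq_sum_le[OF absq]) simp
  have b_le: "cmod (b \<theta>) \<le> 1" for \<theta>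
    by (rule sq_sum_le[where y="cmod (a \<theta>)"]) (use absq[of \<theta>] in auto)
  have aconv: "AE \<theta> in circ_meas. (\<lambda>i. fst (nlft_partial F (r i)) \<theta>) \<longlonglongrightarrow> a \<theta>"
    using Lconv by eventually_elim (drule tendsto_fst, simp add: sp_def a_def)
  have bconv: "AE \<theta> in circ_meas. (\<lambda>i. snd (nlft_partial F (r i)) \<theta>) \<longlonglongrightarrow> b \<theta>"
    using Lconv by eventually_elim (drule tendsto_snd, simp add: sp_def b_def)
  have key: "integral\<^sup>L circ_meas (\<lambda>\<theta>. (norm (sp F k \<theta> - L \<theta>))\<^sup>2) \<le> 2 - 2 * P / pc F k" for k
  proof -
    have lim: "(\<lambda>i. integral\<^sup>L circ_meas (\<lambda>\<theta>. (norm (sp F k \<theta> - sp F (r i) \<theta>))\<^sup>2))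
        \<longlonglongrightarrow> integral\<^sup>L circ_meas (\<lambda>\<theta>. (norm (sp F k \<theta> - L \<theta>))\<^sup>2)"
    proof (rule dct[where K=4])
      show "AE \<theta> in circ_meas. (\<lambda>i. (norm (sp F k \<theta> - sp F (r i) \<theta>))\<^sup>2) \<longlonglongrightarrow> (norm (sp F k \<theta> - L \<theta>))\<^sup>2"
        using Lconv by eventually_elim (intro tendsto_intros)
      show "norm ((norm (sp F k \<theta> - sp F (r i) \<theta>))\<^sup>2) \<le> 4" for i \<theta>
        using norm_diff_sq_le4[of "sp F k \<theta>" "sp F (r i) \<theta>"] by (simp add: sp_norm)
    qed measurable
    show ?thesis
    proof (rule LIMSEQ_le_const2[OF lim], intro exI allI impI)
      fix i assume "k \<le> i"
      then have "k \<le> r i" using seq_suble[OF r(1), of i] by simp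
      then show "integral\<^sup>L circ_meas (\<lambda>\<theta>. (norm (sp F k \<theta> - sp F (r i) \<theta>))\<^sup>2) \<le> 2 - 2 * P / pc F k"
        using Dint_le[OF S, of k "r i"] unfolding P_def by simp
    qed
  qed
  have gint: "integrable circ_meas (\<lambda>\<theta>. (norm (sp F k \<theta> - L \<theta>))\<^sup>2)" for k
    by (rule bint[where K=4]) (auto intro!: norm_diff_sq_le4 simp: sp_norm Lnorm)
  have nsq: "(norm (sp F k \<theta> - L \<theta>))\<^sup>2 = (cmod (fst (nlft_partial F k) \<theta> - a \<theta>))\<^sup>2 + (cmod (snd (nlft_partial F k) \<theta> - b \<theta>))\<^sup>2" for k \<theta>
    unfolding Lab sp_def by (simp add: norm_Pair)
  have LA: "L2_norm (\<lambda>\<theta>. fst (nlft_partial F k) \<theta> - a \<theta>) \<le> sqrt (2 - 2 * P / pc F k)" for k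
  proof -
    have "integral\<^sup>L circ_meas (\<lambda>\<theta>. (cmod (fst (nlft_partial F k) \<theta> - a \<theta>))\<^sup>2) \<le> integral\<^sup>L circ_meas (\<lambda>\<theta>. (norm (sp F k \<theta> - L \<theta>))\<^sup>2)"
    proof (rule integral_mono[OF _ gint])
      show "integrable circ_meas (\<lambda>\<theta>. (cmod (fst (nlft_partial F k) \<theta> - a \<theta>))\<^sup>2)"
        by (rule bint[where K=4], measurable) (auto intro!: norm_diff_sq_le4 simp: A_le1 a_le)
      show "(cmod (fst (nlft_partial F k) \<theta> - a \<theta>))\<^sup>2 \<le> (norm (sp F k \<theta> - L \<theta>))\<^sup>2" for \<theta>
        unfolding nsq by simp
    qed
    then show ?thesis unfolding L2_norm_def using key[of k] by (auto intro: real_sqrt_le_mono)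
  qed
  have LB: "L2_norm (\<lambda>\<theta>. snd (nlft_partial F k) \<theta> - b \<theta>) \<le> sqrt (2 - 2 * P / pc F k)" for k
  proof -
    have "integral\<^sup>L circ_meas (\<lambda>\<theta>. (cmod (snd (nlft_partial F k) \<theta> - b \<theta>))\<^sup>2) \<le> integral\<^sup>L circ_meas (\<lambda>\<theta>. (norm (sp F k \<theta> - L \<theta>))\<^sup>2)"
    proof (rule integral_mono[OF _ gint])
      show "integrable circ_meas (\<lambda>\<theta>. (cmod (snd (nlft_partial F k) \<theta> - b \<theta>))\<^sup>2)"
        by (rule bint[where K=4], measurable) (auto intro!: norm_diff_sq_le4 simp: B_le1 b_le)
      show "(cmod (snd (nlft_partial F k) \<theta> - b \<theta>))\<^sup>2 \<le> (norm (sp F k \<theta> - L \<theta>))\<^sup>2" for \<theta>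
        unfolding nsq by simp
    qed
    then show ?thesis unfolding L2_norm_def using key[of k] by (auto intro: real_sqrt_le_mono)
  qed
  have ainf: "at_infty a = complex_of_real P"
  proof -
    have "(\<lambda>i. circ_int (fst (nlft_partial F (r i)))) \<longlonglongrightarrow> circ_int a"
      unfolding circ_int_def
      by (rule dct[where K=1]) (auto intro!: cont_measurable A_cont simp: aconv A_le1)
    moreover have "(\<lambda>i. circ_int (fst (nlft_partial F (r i)))) \<longlonglongrightarrow> complex_of_real P"
    proof -
      have "(pc F \<circ> r) \<longlonglongrightarrow> P" by (rule LIMSEQ_subseq_LIMSEQ[OF pcP r(1)])
      then have "(\<lambda>i. complex_of_real (pc F (r i))) \<longlonglongrightarrow> complex_of_real P"
        by (intro tendsto_intros) (simp add: o_def)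
      then show ?thesis by (simp add: A_int)
    qed
    ultimately show ?thesis unfolding at_infty_def using LIMSEQ_unique by blast
  qed
  have fa: "circ_int (\<lambda>\<theta>. cnj (a \<theta>) * cis (- 2 * pi * of_int n * \<theta>)) = 0" if n: "n < 0" for n
  proof -
    have "(\<lambda>i. circ_int (\<lambda>\<theta>. cnj (fst (nlft_partial F (r i)) \<theta>) * cis (- 2 * pi * of_int n * \<theta>)))
        \<longlonglongrightarrow> circ_int (\<lambda>\<theta>. cnj (a \<theta>) * cis (- 2 * pi * of_int n * \<theta>))"
      unfolding circ_int_def
    proof (rule dct[where K=1])
      show "AE \<theta> in circ_meas. (\<lambda>i. cnj (fst (nlft_partial F (r i)) \<theta>) * cis (- 2 * pi * of_int n * \<theta>)) \<longlonglongrightarrow> cnj (a \<theta>) * cis (- 2 * pi * of_int n * \<theta>)"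
        using aconv by eventually_elim (intro tendsto_intros)
      show "norm (cnj (fst (nlft_partial F (r i)) \<theta>) * cis (- 2 * pi * of_int n * \<theta>)) \<le> 1" for i \<theta>
        by (simp add: norm_mult A_le1)
      show "(\<lambda>\<theta>. cnj (fst (nlft_partial F (r i)) \<theta>) * cis (- 2 * pi * of_int n * \<theta>)) \<in> borel_measurable circ_meas" for i
        by (intro cont_measurable continuous_intros A_cont)
    qed measurable
    moreover have "circ_int (\<lambda>\<theta>. cnj (fst (nlft_partial F (r i)) \<theta>) * cis (- 2 * pi * of_int n * \<theta>)) = 0" for i
      by (rule tp_fourier[OF cnjA_tp n]) simp
    ultimately have "(\<lambda>i. 0) \<longlonglongrightarrow> circ_int (\<lambda>\<theta>. cnj (a \<theta>) * cis (- 2 * pi * of_int n * \<theta>))" by simp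
    then show ?thesis by (simp add: LIMSEQ_const_iff)
  qed
  have fb: "circ_int (\<lambda>\<theta>. b \<theta> * cis (- 2 * pi * of_int n * \<theta>)) = 0" if n: "n < 0" for n
  proof -
    have "(\<lambda>i. circ_int (\<lambda>\<theta>. snd (nlft_partial F (r i)) \<theta> * cis (- 2 * pi * of_int n * \<theta>)))
        \<longlonglongrightarrow> circ_int (\<lambda>\<theta>. b \<theta> * cis (- 2 * pi * of_int n * \<theta>))"
      unfolding circ_int_def
    proof (rule dct[where K=1])
      show "AE \<theta> in circ_meas. (\<lambda>i. snd (nlft_partial F (r i)) \<theta> * cis (- 2 * pi * of_int n * \<theta>)) \<longlonglongrightarrow> b \<theta> * cis (- 2 * pi * of_int n * \<theta>)"
        using bconv by eventually_elim (intro tendsto_intros)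
      show "norm (snd (nlft_partial F (r i)) \<theta> * cis (- 2 * pi * of_int n * \<theta>)) \<le> 1" for i \<theta>
        by (simp add: norm_mult B_le1)
      show "(\<lambda>\<theta>. snd (nlft_partial F (r i)) \<theta> * cis (- 2 * pi * of_int n * \<theta>)) \<in> borel_measurable circ_meas" for i
        by (intro cont_measurable continuous_intros B_cont)
    qed measurable
    moreover have "circ_int (\<lambda>\<theta>. snd (nlft_partial F (r i)) \<theta> * cis (- 2 * pi * of_int n * \<theta>)) = 0" for i
      by (rule tp_fourier[OF B_tp n]) simp
    ultimately have "(\<lambda>i. 0) \<longlonglongrightarrow> circ_int (\<lambda>\<theta>. b \<theta> * cis (- 2 * pi * of_int n * \<theta>))" by simp
    then show ?thesis by (simp add: LIMSEQ_const_iff)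
  qed
  have L2a: "in_L2 (\<lambda>\<theta>. cnj (a \<theta>))"
    unfolding in_L2_def
    by (auto intro!: bint[where K=1] simp: a_le power_le_one)
  have L2b: "in_L2 b"
    unfolding in_L2_def
    by (auto intro!: bint[where K=1] simp: b_le power_le_one)
  have uab: "a \<theta> * cnj (a \<theta>) + b \<theta> * cnj (b \<theta>) = 1" for \<theta>
  proof -
    have "complex_of_real ((cmod (a \<theta>))\<^sup>2 + (cmod (b \<theta>))\<^sup>2) = 1" using absq[of \<theta>] by simp
    then show ?thesis by (simp add: complex_norm_square[symmetric])
  qed
  have Hbar: "in_Hbar (a, b)"
    unfolding in_Hbar_def in_Lspace_def H2_Dstar_def H2_D_def fourier_coeff_def
    using L2a L2b fa fb uab ainf P0 by auto
  have rho_eq: "rho (nlft_partial F k) (a, b) = L2_norm (\<lambda>\<theta>. fst (nlft_partial F k) \<theta> - a \<theta>)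
      + L2_norm (\<lambda>\<theta>. snd (nlft_partial F k) \<theta> - b \<theta>) + \<bar>ln (pc F k) - ln P\<bar>" for k
    unfolding rho_def at_infty_def A_int using ainf unfolding at_infty_def by simp
  have rho_ge: "0 \<le> rho (nlft_partial F k) (a, b)" for k
    unfolding rho_eq L2_norm_def by simp
  have rho_le: "rho (nlft_partial F k) (a, b) \<le> 2 * sqrt (2 - 2 * P / pc F k) + \<bar>ln (pc F k) - ln P\<bar>" for k
    unfolding rho_eq using LA[of k] LB[of k] by simp
  have t1: "(\<lambda>k. 2 - 2 * P / pc F k) \<longlonglongrightarrow> 0"
  proof -
    have "(\<lambda>k. 2 - 2 * P / pc F k) \<longlonglongrightarrow> 2 - 2 * P / P"
      by (intro tendsto_intros pcP) (use P0 in simp)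
    then show ?thesis using P0 by simp
  qed
  have t2: "(\<lambda>k. 2 * sqrt (2 - 2 * P / pc F k) + \<bar>ln (pc F k) - ln P\<bar>) \<longlonglongrightarrow> 2 * sqrt 0 + \<bar>ln P - ln P\<bar>"
    by (intro tendsto_intros t1 pcP) (use P0 in simp)
  have rho_lim: "(\<lambda>k. rho (nlft_partial F k) (a, b)) \<longlonglongrightarrow> 0"
    by (rule tendsto_sandwich[OF _ _ tendsto_const t2[simplified]]) (auto simp: rho_ge rho_le)
  have hp: "(\<lambda>n. 1 / sqrt (1 + (cmod (F (int n)))\<^sup>2)) has_prod Re (at_infty a)"
    using pc_lim(4)[OF S] unfolding ainf P_def layer_const_def[abs_def] by simp
  show ?thesis
    using nlft_Lspace Hbar rho_lim hp by blast
qed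


end
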